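(* Let $T$ be a tournament, let $v\in V(T)$ and let $c\in\mathbb{N}$ with $c\ge 2$. Suppose that $d^-_T(v)\ge 2^{c-1}$. Then there exist disjoint sets $A,E\subseteq V(T)$ and a vertex $a\in A$ such that: (i) $2\le |A|\le c$ and $T[A]$ is a transitive tournament with source $a$ and sink $v$; (ii) $A\setminus\{a\}$ out-dominates $V(T)\setminus(A\cup E)$; (iii) $|E|\le (1/2)^{c-2} d^-_T(v)$.
   Context: $d^-_T(v)$ is the in-degree of $v$ in $T$. A tournament is transitive if its vertices can be enumerated $v_1,\dots,v_m$ so that $v_iv_j$ is an edge iff $i<j$; then $v_1$ is its source and $v_m$ its sink. A set $A$ out-dominates a set $B$ if for every $b\in B$ there is $a'\in A$ with $a'b\in E(T)$. *)

theory Defs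
  imports Complex_Main
begin

definition tournament :: "'a set \<Rightarrow> ('a \<Rightarrow> 'a \<Rightarrow> bool) \<Rightarrow> bool" where
  "tournament V adj \<longleftrightarrow> finite V \<and>
     (\<forall>u w. adj u w \<longrightarrow> u \<in> V \<and> w \<in> V) \<and>
     (\<forall>u. \<not> adj u u) \<and>
     (\<forall>u\<in>V. \<forall>w\<in>V. u \<noteq> w \<longrightarrow> (adj u w \<longleftrightarrow> \<not> adj w u))"

definition in_degree :: "'a set \<Rightarrow> ('a \<Rightarrow> 'a \<Rightarrow> bool) \<Rightarrow> 'a \<Rightarrow> nat" where
  "in_degree V adj v = card {u \<in> V. adj u v}"

definition transitive_with_source_sink ::
  "('a \<Rightarrow> 'a \<Rightarrow> bool) \<Rightarrow> 'a set \<Rightarrow> 'a \<Rightarrow> 'a \<Rightarrow> bool" where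
  "transitive_with_source_sink adj A a v \<longleftrightarrow>
     (\<exists>xs. distinct xs \<and> set xs = A \<and> xs \<noteq> [] \<and> hd xs = a \<and> last xs = v \<and>
        (\<forall>i<length xs. \<forall>j<length xs. adj (xs ! i) (xs ! j) \<longleftrightarrow> i < j))"

definition out_dominates :: "('a \<Rightarrow> 'a \<Rightarrow> bool) \<Rightarrow> 'a set \<Rightarrow> 'a set \<Rightarrow> bool" where
  "out_dominates adj A B \<longleftrightarrow> (\<forall>b\<in>B. \<exists>a'\<in>A. adj a' b)"

end

theory Submission
  imports Defs
begin

lemma card_filter_sum:
  "finite S \<Longrightarrow> card {u\<in>S. P u} = (\<Sum>u\<in>S. if P u then 1 else (0::nat))"
  by (simp add: sum.If_cases Collect_conj_eq Int_commute)

lemma tD: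
  assumes "tournament V adj"
  shows "finite V" "\<And>u w. adj u w \<Longrightarrow> u \<in> V" "\<And>u w. adj u w \<Longrightarrow> w \<in> V"
    "\<And>u. \<not> adj u u" "\<And>u w. u \<in> V \<Longrightarrow> w \<in> V \<Longrightarrow> u \<noteq> w \<Longrightarrow> adj u w \<longleftrightarrow> \<not> adj w u"
  using assms unfolding tournament_def by blast+

lemma in_out_split:
  assumes T: "tournament V adj" and S: "S \<subseteq> V" and x: "x \<in> S"
  shows "card {u\<in>S. adj u x} + card {u\<in>S. adj x u} = card S - 1"
proof -
  have fin: "finite S" using tD(1)[OF T] S by (meson finite_subset)
  have un: "{u\<in>S. adj u x} \<union> {u\<in>S. adj x u} = S - {x}"
    using tD(4,5)[OF T] S x by auto
  have dis: "{u\<in>S. adj u x} \<inter> {u\<in>S. adj x u} = {}"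
    using tD(4,5)[OF T] S x by auto
  have "card ({u\<in>S. adj u x} \<union> {u\<in>S. adj x u}) = card {u\<in>S. adj u x} + card {u\<in>S. adj x u}"
    using fin dis by (intro card_Un_disjoint) auto
  then show ?thesis using un fin x by simp
qed

lemma sum_in:
  assumes T: "tournament V adj" and S: "S \<subseteq> V"
  shows "2 * (\<Sum>x\<in>S. card {u\<in>S. adj u x}) = card S * (card S - 1)"
proof -
  have fin: "finite S" using tD(1)[OF T] S by (meson finite_subset)
  have eq: "(\<Sum>x\<in>S. card {u\<in>S. adj u x}) = (\<Sum>x\<in>S. card {u\<in>S. adj x u})"
  proof -
    have "(\<Sum>x\<in>S. card {u\<in>S. adj u x}) = (\<Sum>x\<in>S. \<Sum>u\<in>S. if adj u x then 1 else (0::nat))"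
      using fin by (simp add: card_filter_sum)
    also have "\<dots> = (\<Sum>u\<in>S. \<Sum>x\<in>S. if adj u x then 1 else (0::nat))"
      by (rule sum.swap)
    also have "\<dots> = (\<Sum>x\<in>S. card {u\<in>S. adj x u})"
      using fin by (simp add: card_filter_sum)
    finally show ?thesis .
  qed
  have "(\<Sum>x\<in>S. card {u\<in>S. adj u x}) + (\<Sum>x\<in>S. card {u\<in>S. adj x u}) = (\<Sum>x\<in>S. card S - 1)"
    unfolding sum.distrib[symmetric] using in_out_split[OF T S] by (intro sum.cong) auto
  then show ?thesis using eq by simp
qed

lemma exists_low:
  assumes T: "tournament V adj" and S: "S \<subseteq> V" and ne: "S \<noteq> {}"
  shows "\<exists>x\<in>S. 2 * card {u\<in>S. adj u x} \<le> card S - 1"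
proof (rule ccontr)
  assume "\<not> ?thesis"
  then have h: "\<And>x. x \<in> S \<Longrightarrow> card S \<le> 2 * card {u\<in>S. adj u x}" by force
  have fin: "finite S" using tD(1)[OF T] S by (meson finite_subset)
  have "(\<Sum>x\<in>S. card S) \<le> (\<Sum>x\<in>S. 2 * card {u\<in>S. adj u x})"
    using h by (intro sum_mono) auto
  then have "card S * card S \<le> card S * (card S - 1)"
    using sum_in[OF T S] by (simp add: sum_distrib_left[symmetric])
  moreover have "card S > 0" using fin ne by auto
  ultimately show False by simp
qed

lemma exists_mid:
  assumes T: "tournament V adj" and S: "S \<subseteq> V" and two: "2 \<le> card S"
  shows "\<exists>x\<in>S. 1 \<le> card {u\<in>S. adj u x} \<and> 2 * card {u\<in>S. adj u x} \<le> card S"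
proof (cases "\<exists>s\<in>S. card {u\<in>S. adj u s} = 0")
  case False
  have "S \<noteq> {}" using two by auto
  then obtain x where "x \<in> S" "2 * card {u\<in>S. adj u x} \<le> card S - 1"
    using exists_low[OF T S] by blast
  then show ?thesis using False by (intro bexI[of _ x]) auto
next
  case True
  then obtain s where s: "s \<in> S" "card {u\<in>S. adj u s} = 0" by blast
  have fin: "finite S" using tD(1)[OF T] S by (meson finite_subset)
  have cS: "card (S - {s}) = card S - 1" using fin s(1) by simp
  have S'1: "S - {s} \<subseteq> V" using S by blast
  have S'2: "S - {s} \<noteq> {}"
  proof
    assume "S - {s} = {}"
    then have "S = {s}" using s(1) by blast
    with two show False by simp
  qed
  note S' = S'1 S'2
  obtain y where y: "y \<in> S - {s}" "2 * card {u\<in>S - {s}. adj u y} \<le> card (S - {s}) - 1"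
    using exists_low[OF T S'] by blast
  have nsy: "\<not> adj y s" using s fin y by auto
  have "adj s y" using tD(5)[OF T, of s y] S s(1) y(1) nsy by auto
  have eq: "{u\<in>S. adj u y} = insert s {u\<in>S - {s}. adj u y}" using s(1) \<open>adj s y\<close> by auto
  have c: "card {u\<in>S. adj u y} = Suc (card {u\<in>S - {s}. adj u y})"
    unfolding eq using fin by (subst card_insert_disjoint) auto
  have y1: "y \<in> S" using y(1) by blast
  have k: "2 * card {u\<in>S - {s}. adj u y} \<le> card S - 1 - 1" using y(2) cS by simp
  have "2 * card {u\<in>S. adj u y} \<le> card S" unfolding c using k two by arith
  moreover have "1 \<le> card {u\<in>S. adj u y}" unfolding c by simp
  ultimately show ?thesis using y1 by blast
qed

lemma sorted_idx:
  assumes T: "tournament V adj" and d: "distinct xs" and sw: "sorted_wrt adj xs"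
  shows "\<forall>i<length xs. \<forall>j<length xs. adj (xs ! i) (xs ! j) \<longleftrightarrow> i < j"
proof (intro allI impI)
  fix i j assume i: "i < length xs" and j: "j < length xs"
  have lt: "\<And>i j. i < j \<Longrightarrow> j < length xs \<Longrightarrow> adj (xs ! i) (xs ! j)"
    using sw by (simp add: sorted_wrt_iff_nth_less)
  show "adj (xs ! i) (xs ! j) \<longleftrightarrow> i < j"
  proof (cases "i < j")
    case True then show ?thesis using lt j by simp
  next
    case False
    show ?thesis
    proof (cases "i = j")
      case True then show ?thesis using tD(4)[OF T] by simp
    next
      case False
      with \<open>\<not> i < j\<close> have "j < i" by simp
      then have a: "adj (xs ! j) (xs ! i)" using lt i by simp
      have "xs ! i \<noteq> xs ! j" using d i j False by (simp add: nth_eq_iff_index_eq)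
      then have "\<not> adj (xs ! i) (xs ! j)"
        using a tD(2,3,5)[OF T] by metis
      then show ?thesis using \<open>j < i\<close> by simp
    qed
  qed
qed

lemma base_step:
  assumes T: "tournament V adj" and S: "S \<subseteq> V" "S \<noteq> {}"
    and ys: "distinct ys" "set ys \<subseteq> V" "sorted_wrt adj ys"
    and Sy: "\<forall>u\<in>S. \<forall>w\<in>set ys. adj u w" "S \<inter> set ys = {}"
    and dom: "out_dominates adj (set ys) (V - (set ys \<union> S))"
  shows "\<exists>a. a \<in> S \<and> distinct ([a] @ ys) \<and> sorted_wrt adj ([a] @ ys) \<and>
     out_dominates adj (set (tl [a]) \<union> set ys) (V - (set [a] \<union> set ys \<union> (S - {a})))"
proof -
  obtain a where a: "a \<in> S" using S by blast
  have "V - (set [a] \<union> set ys \<union> (S - {a})) = V - (set ys \<union> S)" using a by auto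
  then show ?thesis using a ys Sy dom by (intro exI[of _ a]) auto
qed

lemma chain:
  assumes T: "tournament V adj"
  shows "S \<subseteq> V \<Longrightarrow> S \<noteq> {} \<Longrightarrow> distinct ys \<Longrightarrow> set ys \<subseteq> V \<Longrightarrow> sorted_wrt adj ys \<Longrightarrow>
    (\<forall>u\<in>S. \<forall>w\<in>set ys. adj u w) \<Longrightarrow> S \<inter> set ys = {} \<Longrightarrow>
    out_dominates adj (set ys) (V - (set ys \<union> S)) \<Longrightarrow>
    \<exists>pre E. pre \<noteq> [] \<and> set pre \<subseteq> S \<and> length pre \<le> Suc k \<and> distinct (pre @ ys) \<and>
      sorted_wrt adj (pre @ ys) \<and> E \<subseteq> S - set pre \<and>
      out_dominates adj (set (tl pre) \<union> set ys) (V - (set pre \<union> set ys \<union> E)) \<and>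
      card E * 2 ^ k \<le> card S"
proof (induction k arbitrary: S ys)
  case 0
  obtain a where a: "a \<in> S" "distinct ([a] @ ys)" "sorted_wrt adj ([a] @ ys)"
     "out_dominates adj (set (tl [a]) \<union> set ys) (V - (set [a] \<union> set ys \<union> (S - {a})))"
    using base_step[OF T 0(1-8)] by blast
  have fin: "finite S" using tD(1)[OF T] 0(1) by (meson finite_subset)
  have "card (S - {a}) \<le> card S" using fin by (simp add: card_mono)
  then show ?case using a
    by (intro exI[of _ "[a]"] exI[of _ "S - {a}"]) auto
next
  case (Suc k)
  have fin: "finite S" using tD(1)[OF T] Suc(2) by (meson finite_subset)
  show ?case
  proof (cases "card S \<ge> 2")
    case False
    obtain a where a: "a \<in> S" "distinct ([a] @ ys)" "sorted_wrt adj ([a] @ ys)"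
       "out_dominates adj (set (tl [a]) \<union> set ys) (V - (set [a] \<union> set ys \<union> (S - {a})))"
      using base_step[OF T Suc(2-9)] by blast
    have "card S \<le> 1" using False by simp
    then have "\<forall>a1\<in>S. \<forall>a2\<in>S. a1 = a2" using card_le_Suc0_iff_eq[OF fin] by simp
    then have "S = {a}" using a(1) by blast
    have d: "out_dominates adj (set (tl [a]) \<union> set ys) (V - (set [a] \<union> set ys \<union> {}))"
      using a(4) \<open>S = {a}\<close> by simp
    show ?thesis
      apply (rule exI[of _ "[a]"], rule exI[of _ "{}"])
      using a(1-3) d by simp
  next
    case True
    obtain x where x: "x \<in> S" "1 \<le> card {u\<in>S. adj u x}" "2 * card {u\<in>S. adj u x} \<le> card S"
      using exists_mid[OF T Suc(2) True] by blast
    define S' where "S' = {u\<in>S. adj u x}"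
    have xV: "x \<in> V" using x(1) Suc(2) by blast
    have h1: "S' \<subseteq> V" using Suc(2) unfolding S'_def by blast
    have h2: "S' \<noteq> {}" using x(2) unfolding S'_def by (metis card.empty not_one_le_zero)
    have xys: "x \<notin> set ys" using x(1) Suc(8) by blast
    have h3: "distinct (x # ys)" using xys Suc(4) by simp
    have h4: "set (x # ys) \<subseteq> V" using xV Suc(5) by simp
    have h5: "sorted_wrt adj (x # ys)" using Suc(6,7) x(1) by simp
    have h6: "\<forall>u\<in>S'. \<forall>w\<in>set (x # ys). adj u w" using Suc(7) unfolding S'_def by auto
    have xS': "x \<notin> S'" using tD(4)[OF T] unfolding S'_def by blast
    have h7: "S' \<inter> set (x # ys) = {}" using xS' Suc(8) unfolding S'_def by auto
    have h8: "out_dominates adj (set (x # ys)) (V - (set (x # ys) \<union> S'))"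
      unfolding out_dominates_def
    proof
      fix b assume b: "b \<in> V - (set (x # ys) \<union> S')"
      show "\<exists>a'\<in>set (x # ys). adj a' b"
      proof (cases "b \<in> S")
        case True
        then have "\<not> adj b x" "b \<noteq> x" using b unfolding S'_def by auto
        then have "adj x b" using tD(5)[OF T, of x b] xV b by auto
        then show ?thesis by simp
      next
        case False
        then have "b \<in> V - (set ys \<union> S)" using b by auto
        then show ?thesis using Suc(9) unfolding out_dominates_def by auto
      qed
    qed
    obtain pre E where IH: "pre \<noteq> []" "set pre \<subseteq> S'" "length pre \<le> Suc k" "distinct (pre @ x # ys)"
      "sorted_wrt adj (pre @ x # ys)" "E \<subseteq> S' - set pre"
      "out_dominates adj (set (tl pre) \<union> set (x # ys)) (V - (set pre \<union> set (x # ys) \<union> E))"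
      "card E * 2 ^ k \<le> card S'"
      using Suc.IH[OF h1 h2 h3 h4 h5 h6 h7 h8] by blast
    have S'S: "S' \<subseteq> S" unfolding S'_def by blast
    have tl: "tl (pre @ [x]) = tl pre @ [x]" using IH(1) by (cases pre) auto
    have e1: "set (tl (pre @ [x])) \<union> set ys = set (tl pre) \<union> set (x # ys)" using tl by auto
    have e2: "set (pre @ [x]) \<union> set ys \<union> E = set pre \<union> set (x # ys) \<union> E" by auto
    have c: "card E * 2 ^ Suc k \<le> card S"
      using IH(8) x(3) unfolding S'_def by simp
    show ?thesis
      apply (intro exI[of _ "pre @ [x]"] exI[of _ E])
      using IH x(1) S'S xS' c e1 e2 by auto
  qed
qed

theorem lemma2p3:
  fixes V :: "'a set" and adj :: "'a \<Rightarrow> 'a \<Rightarrow> bool" and v :: 'a and c :: nat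
  assumes "tournament V adj" and "v \<in> V" and "c \<ge> 2"
    and "in_degree V adj v \<ge> 2 ^ (c - 1)"
  shows "\<exists>A E a. A \<subseteq> V \<and> E \<subseteq> V \<and> A \<inter> E = {} \<and> a \<in> A \<and>
           2 \<le> card A \<and> card A \<le> c \<and> transitive_with_source_sink adj A a v \<and>
           out_dominates adj (A - {a}) (V - (A \<union> E)) \<and>
           real (card E) \<le> (1/2) ^ (c - 2) * real (in_degree V adj v)"
proof -
  note T = assms(1)
  define S where "S = {u\<in>V. adj u v}"
  have dS: "in_degree V adj v = card S" unfolding S_def in_degree_def by simp
  have h1: "S \<subseteq> V" unfolding S_def by blast
  have "card S \<ge> 1" using assms(4) dS by (metis le_trans one_le_numeral one_le_power)
  then have h2: "S \<noteq> {}" by auto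
  have h3: "distinct [v]" by simp
  have h4: "set [v] \<subseteq> V" using assms(2) by simp
  have h5: "sorted_wrt adj [v]" by simp
  have h6: "\<forall>u\<in>S. \<forall>w\<in>set [v]. adj u w" unfolding S_def by simp
  have h7: "S \<inter> set [v] = {}" unfolding S_def using tD(4)[OF T] by auto
  have h8: "out_dominates adj (set [v]) (V - (set [v] \<union> S))"
    unfolding out_dominates_def S_def using tD(5)[OF T] assms(2) by auto
  obtain pre E where P: "pre \<noteq> []" "set pre \<subseteq> S" "length pre \<le> Suc (c - 2)" "distinct (pre @ [v])"
      "sorted_wrt adj (pre @ [v])" "E \<subseteq> S - set pre"
      "out_dominates adj (set (tl pre) \<union> set [v]) (V - (set pre \<union> set [v] \<union> E))"
      "card E * 2 ^ (c - 2) \<le> card S"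
    using chain[OF T h1 h2 h3 h4 h5 h6 h7 h8, of "c - 2"] by blast
  define A where "A = set (pre @ [v])"
  define a where "a = hd pre"
  have cA: "card A = Suc (length pre)" unfolding A_def using P(4) distinct_card by fastforce
  have aA: "a \<in> A" unfolding A_def a_def using P(1) by simp
  have AV: "A \<subseteq> V" unfolding A_def using P(2) h1 assms(2) by auto
  have EV: "E \<subseteq> V" using P(6) h1 by auto
  have AE: "A \<inter> E = {}" unfolding A_def using P(6) h7 by auto
  have c2: "2 \<le> card A" using cA P(1) by (cases pre) auto
  have c3: "card A \<le> c" using cA P(3) assms(3) by simp
  have tr: "transitive_with_source_sink adj A a v"
    unfolding transitive_with_source_sink_def A_def a_def
    apply (rule exI[of _ "pre @ [v]"])
    using P(1,4) sorted_idx[OF T P(4,5)] by simp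
  have Aa: "A - {a} = set (tl pre) \<union> set [v]"
  proof -
    have "pre = a # tl pre" unfolding a_def using P(1) by simp
    then have "A = insert a (set (tl pre) \<union> set [v])" unfolding A_def by (metis Un_insert_left list.simps(15) set_append)
    moreover have "a \<notin> set (tl pre) \<union> set [v]" using P(4) \<open>pre = a # tl pre\<close>
      by (metis Un_iff append_Cons distinct.simps(2) set_append)
    ultimately show ?thesis by auto
  qed
  have dom: "out_dominates adj (A - {a}) (V - (A \<union> E))"
  proof -
    have e: "V - (A \<union> E) = V - (set pre \<union> set [v] \<union> E)" unfolding A_def by auto
    show ?thesis unfolding e Aa by (rule P(7))
  qed
  have "real (card E) * 2 ^ (c - 2) \<le> real (card S)"
    using P(8) by (metis of_nat_le_iff of_nat_mult of_nat_numeral of_nat_power)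
  then have "real (card E) \<le> real (card S) / 2 ^ (c - 2)"
    by (subst pos_le_divide_eq) auto
  then have ce: "real (card E) \<le> (1/2) ^ (c - 2) * real (in_degree V adj v)"
  proof -
    have "(1/2::real)^(c-2) * real (card S) = real (card S) / 2^(c-2)"
      by (simp add: power_one_over)
    then show ?thesis unfolding dS using \<open>real (card E) \<le> real (card S) / 2 ^ (c - 2)\<close> by linarith
  qed
  show ?thesis
    apply (rule exI[of _ A], rule exI[of _ E], rule exI[of _ a])
    using AV EV AE aA c2 c3 tr dom ce by (intro conjI)
qed

end
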